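(* Let $A\subseteq\mathbb{R}$ be open, $x\in A$, and $f:A\to\mathbb{R}$ locally Lipschitz. The following are equivalent: (1) $f$ is differentiable at $x$; (2) there exists a unique $m\in\mathbb{R}$ such that ${}^\bullet f(x+h)=f(x)+h\cdot m$ in ${}^\bullet\mathbb{R}$ for all $h\in D$. In this case $m=f'(x)$.
   Context: A function $x:\mathbb{R}\to\mathbb{R}$ is nilpotent if $|x(t)-x(0)|^k=o(t)$ as $t\to0$ for some $k\in\mathbb{N}$; for $A\subseteq\mathbb{R}$, $\mathrm{Nil}(A)$ is the set of nilpotent functions with values in $A$. For such $x,y$, $x\sim y$ iff $x(t)=y(t)+o(t)$ as $t\to0$. ${}^\bullet A:=\mathrm{Nil}(A)/\sim$, identified with a subset of ${}^\bullet\mathbb{R}:=\mathrm{Nil}(\mathbb{R})/\sim$ (a commutative ring under pointwise operations, reals identified with constant functions). For locally Lipschitz $f:A\to\mathbb{R}$, ${}^\bullet f([y]):=[f\circ y]$ on ${}^\bullet A$. $D:=\{h\in{}^\bullet\mathbb{R}:\limsup_{t\to0}|h(t)/t|<+\infty\}$. For $h\in D$ and $x\in A$ open, $x+h\in{}^\bullet A$, so ${}^\bullet f(x+h)$ is defined. *)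

theory Defs
  imports "HOL-Analysis.Analysis" "HOL-Library.Landau_Symbols"
begin

definition nilpotent :: "(real \<Rightarrow> real) \<Rightarrow> bool" where
  "nilpotent x \<longleftrightarrow> (\<exists>k::nat. (\<lambda>t. \<bar>x t - x 0\<bar> ^ k) \<in> o[at 0](\<lambda>t. t))"

definition Nil_fun :: "real set \<Rightarrow> (real \<Rightarrow> real) set" where
  "Nil_fun A = {x. nilpotent x \<and> (\<forall>t. x t \<in> A)}"

definition fr_eqv :: "(real \<Rightarrow> real) \<Rightarrow> (real \<Rightarrow> real) \<Rightarrow> bool" where
  "fr_eqv x y \<longleftrightarrow> (\<lambda>t. x t - y t) \<in> o[at 0](\<lambda>t. t)"

definition in_D :: "(real \<Rightarrow> real) \<Rightarrow> bool" where
  "in_D h \<longleftrightarrow> nilpotent h \<and> h \<in> O[at 0](\<lambda>t. t)"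

text \<open>ext_val f A X Z means: the class [X] lies in the extension of A (it has a
  representative y in Nil(A)) and the extension of f maps [X] to [Z],
  i.e. [f \<circ> y] = [Z].\<close>
definition ext_val :: "(real \<Rightarrow> real) \<Rightarrow> real set \<Rightarrow> (real \<Rightarrow> real) \<Rightarrow> (real \<Rightarrow> real) \<Rightarrow> bool" where
  "ext_val f A X Z \<longleftrightarrow> (\<exists>y \<in> Nil_fun A. fr_eqv y X \<and> fr_eqv (f \<circ> y) Z)"

definition locally_lipschitz_on :: "real set \<Rightarrow> (real \<Rightarrow> real) \<Rightarrow> bool" where
  "locally_lipschitz_on A f \<longleftrightarrow>
     (\<forall>a\<in>A. \<exists>e>0. \<exists>L. L-lipschitz_on (cball a e \<inter> A) f)"

end

theory Submission
  imports Defs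
begin

lemma smallo_iff:
  "(g::real\<Rightarrow>real) \<in> o[at 0](\<lambda>t. t) \<longleftrightarrow>
     (\<forall>c>0. \<exists>d>0. \<forall>t. t \<noteq> 0 \<and> \<bar>t\<bar> < d \<longrightarrow> \<bar>g t\<bar> \<le> c * \<bar>t\<bar>)"
proof
  assume "g \<in> o[at 0](\<lambda>t. t)"
  then show "\<forall>c>0. \<exists>d>0. \<forall>t. t \<noteq> 0 \<and> \<bar>t\<bar> < d \<longrightarrow> \<bar>g t\<bar> \<le> c * \<bar>t\<bar>"
    by (auto dest!: landau_o.smallD simp: eventually_at dist_norm)
next
  assume H: "\<forall>c>0. \<exists>d>0. \<forall>t. t \<noteq> 0 \<and> \<bar>t\<bar> < d \<longrightarrow> \<bar>g t\<bar> \<le> c * \<bar>t\<bar>"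
  show "g \<in> o[at 0](\<lambda>t. t)"
  proof (rule landau_o.smallI)
    fix c :: real assume "c > 0"
    with H obtain d where "d > 0" "\<forall>t. t \<noteq> 0 \<and> \<bar>t\<bar> < d \<longrightarrow> \<bar>g t\<bar> \<le> c * \<bar>t\<bar>" by blast
    then show "eventually (\<lambda>t. norm (g t) \<le> c * norm t) (at 0)"
      by (auto simp: eventually_at dist_norm)
  qed
qed

lemma bigo_iff:
  "(g::real\<Rightarrow>real) \<in> O[at 0](\<lambda>t. t) \<Longrightarrow>
     (\<exists>c>0. \<exists>d>0. \<forall>t. t \<noteq> 0 \<and> \<bar>t\<bar> < d \<longrightarrow> \<bar>g t\<bar> \<le> c * \<bar>t\<bar>)"
  by (auto elim!: landau_o.bigE simp: eventually_at dist_norm)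

lemma deriv_delta:
  assumes "(f has_real_derivative m) (at x)" "e > 0"
  shows "\<exists>d>0. \<forall>u. \<bar>u\<bar> < d \<longrightarrow> \<bar>f (x + u) - f x - u * m\<bar> \<le> e * \<bar>u\<bar>"
proof -
  have "((\<lambda>h. (f (x + h) - f x) / h) \<longlongrightarrow> m) (at 0)" using assms(1) by (simp add: DERIV_def)
  then have "eventually (\<lambda>h. dist ((f (x + h) - f x) / h) m < e) (at 0)"
    using assms(2) by (rule tendstoD)
  then obtain d where d: "d > 0" "\<forall>u. u \<noteq> 0 \<and> \<bar>u\<bar> < d \<longrightarrow> \<bar>(f (x + u) - f x) / u - m\<bar> < e"
    by (auto simp: eventually_at dist_norm)
  have "\<bar>f (x + u) - f x - u * m\<bar> \<le> e * \<bar>u\<bar>" if "\<bar>u\<bar> < d" for u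
  proof (cases "u = 0")
    case False
    have "\<bar>f (x + u) - f x - u * m\<bar> = \<bar>u\<bar> * \<bar>(f (x + u) - f x) / u - m\<bar>"
      using False by (simp add: field_simps abs_mult[symmetric])
    also have "\<dots> \<le> \<bar>u\<bar> * e" using d that False by (intro mult_left_mono) auto
    finally show ?thesis by (simp add: mult.commute)
  qed simp
  with d show ?thesis by blast
qed



lemma deriv_from_delta:
  assumes "\<forall>c>0. \<exists>d>0. \<forall>t. t \<noteq> 0 \<and> \<bar>t\<bar> < d \<longrightarrow> \<bar>f (x + t) - f x - t * m\<bar> \<le> c * \<bar>t\<bar>"
  shows "(f has_real_derivative m) (at x)"
  unfolding DERIV_def
proof (rule tendstoI)
  fix e :: real assume "e > 0"
  then have e2: "e/2 > 0" by simp
  from mp[OF spec[OF assms, of "e/2"] e2]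
  obtain d where d: "d > 0" "\<forall>t. t \<noteq> 0 \<and> \<bar>t\<bar> < d \<longrightarrow> \<bar>f (x + t) - f x - t * m\<bar> \<le> (e/2) * \<bar>t\<bar>"
    by (elim exE conjE)
  have "dist ((f (x + t) - f x) / t) m < e" if "t \<noteq> 0" "\<bar>t\<bar> < d" for t
  proof -
    have "dist ((f (x + t) - f x) / t) m = \<bar>f (x + t) - f x - t * m\<bar> / \<bar>t\<bar>"
    proof -
      have "(f (x + t) - f x) / t - m = (f (x + t) - f x - t * m) / t"
        using that(1) by (simp add: diff_divide_distrib)
      then show ?thesis by (simp add: dist_real_def abs_divide)
    qed
    also have "\<dots> \<le> e/2" using d that by (simp add: divide_le_eq)
    finally show ?thesis using \<open>e > 0\<close> by linarith
  qed
  then show "eventually (\<lambda>t. dist ((f (x + t) - f x) / t) m < e) (at 0)"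
    using d(1) by (auto simp: eventually_at dist_norm)
qed

lemma in_D_id: "in_D (\<lambda>t. t)"
proof -
  have "(\<lambda>t. \<bar>(t::real) - 0\<bar> ^ 2) \<in> o[at 0](\<lambda>t. t)"
    unfolding smallo_iff
  proof (intro allI impI)
    fix c :: real assume "c > 0"
    have "\<bar>\<bar>t - 0\<bar> ^ 2\<bar> \<le> c * \<bar>t\<bar>" if "\<bar>t\<bar> < c" for t :: real
    proof -
      have "\<bar>\<bar>t - 0\<bar> ^ 2\<bar> = \<bar>t\<bar> * \<bar>t\<bar>" by (simp add: power2_eq_square abs_mult)
      also have "\<dots> \<le> c * \<bar>t\<bar>" using that by (intro mult_right_mono) auto
      finally show ?thesis .
    qed
    then show "\<exists>d>0. \<forall>t. t \<noteq> 0 \<and> \<bar>t\<bar> < d \<longrightarrow> \<bar>\<bar>t - 0\<bar> ^ 2\<bar> \<le> c * \<bar>t\<bar>"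
      using \<open>c > 0\<close> by blast
  qed
  then have "nilpotent (\<lambda>t. t)" unfolding nilpotent_def by blast
  moreover have "(\<lambda>t::real. t) \<in> O[at 0](\<lambda>t. t)"
    by (rule landau_o.bigI[of 1]) auto
  ultimately show ?thesis by (simp add: in_D_def)
qed

lemma in_D_zero:
  assumes "in_D h" shows "h 0 = 0"
proof (rule ccontr)
  assume "h 0 \<noteq> 0"
  define a where "a = \<bar>h 0\<bar>"
  have a: "a > 0" using \<open>h 0 \<noteq> 0\<close> by (simp add: a_def)
  from assms obtain k where k: "(\<lambda>t. \<bar>h t - h 0\<bar> ^ k) \<in> o[at 0](\<lambda>t. t)"
    by (auto simp: in_D_def nilpotent_def)
  then obtain d1 where d1: "d1 > 0" "\<forall>t. t \<noteq> 0 \<and> \<bar>t\<bar> < d1 \<longrightarrow> \<bar>\<bar>h t - h 0\<bar> ^ k\<bar> \<le> 1 * \<bar>t\<bar>"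
    unfolding smallo_iff by (auto dest: spec[of _ 1])
  from assms have "h \<in> O[at 0](\<lambda>t. t)" by (simp add: in_D_def)
  from bigo_iff[OF this] obtain c d2 where c: "c > 0" "d2 > 0" "\<forall>t. t \<noteq> 0 \<and> \<bar>t\<bar> < d2 \<longrightarrow> \<bar>h t\<bar> \<le> c * \<bar>t\<bar>"
    by blast
  define t where "t = min (min (d1/2) (d2/2)) (min (a/(2*c)) ((a/2)^k/2))"
  have ak: "(a/2)^k > 0" using a by simp
  have t0: "t > 0" using d1 c a ak by (simp add: t_def)
  have "t \<le> (a/2)^k/2" by (simp add: t_def)
  then have t1d: "t < (a/2)^k" using ak by linarith
  have t1: "t < d1" "t < d2" "t \<le> a/(2*c)" "t < (a/2)^k" using d1 c a t1d by (auto simp: t_def)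
  have "\<bar>h t\<bar> \<le> c * t" using c(3)[rule_format, of t] t0 t1 by auto
  also have "\<dots> \<le> c * (a/(2*c))" using t1 c by (intro mult_left_mono) auto
  also have "\<dots> = a/2" using c by simp
  finally have "\<bar>h t\<bar> \<le> a/2" .
  then have "a/2 \<le> \<bar>h t - h 0\<bar>" unfolding a_def by linarith
  then have "(a/2)^k \<le> \<bar>h t - h 0\<bar>^k" using a by (intro power_mono) auto
  also have "\<dots> \<le> t" using d1(2)[rule_format, of t] t0 t1 by auto
  finally show False using t1 by linarith
qed


lemma lip_near:
  assumes "open A" "x \<in> A" "locally_lipschitz_on A f"
  obtains r L where "r > 0" "L \<ge> 0" "\<And>u v. \<bar>u - x\<bar> \<le> r \<Longrightarrow> \<bar>v - x\<bar> \<le> r \<Longrightarrow> \<bar>f u - f v\<bar> \<le> L * \<bar>u - v\<bar>"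
    "\<And>u. \<bar>u - x\<bar> \<le> r \<Longrightarrow> u \<in> A"
proof -
  obtain e L where e: "e > 0" "L-lipschitz_on (cball x e \<inter> A) f"
    using assms(2,3) unfolding locally_lipschitz_on_def by blast
  obtain r0 where r0: "r0 > 0" "ball x r0 \<subseteq> A" using assms(1,2) openE by blast
  define r where "r = min e (r0/2)"
  have r: "r > 0" using e r0 by (simp add: r_def)
  have inA: "u \<in> A" if "\<bar>u - x\<bar> \<le> r" for u
  proof -
    have "\<bar>x - u\<bar> < r0" using that r0 by (auto simp: r_def abs_minus_commute)
    then show ?thesis using r0 by (auto simp: dist_norm subset_iff)
  qed
  have lipL: "\<bar>f u - f v\<bar> \<le> \<bar>L\<bar> * \<bar>u - v\<bar>" if "\<bar>u - x\<bar> \<le> r" "\<bar>v - x\<bar> \<le> r" for u v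
  proof -
    have "u \<in> cball x e \<inter> A" "v \<in> cball x e \<inter> A"
      using that inA by (auto simp: r_def dist_norm abs_minus_commute)
    from lipschitz_onD[OF e(2) this] have "\<bar>f u - f v\<bar> \<le> L * \<bar>u - v\<bar>" by (simp add: dist_norm)
    also have "\<dots> \<le> \<bar>L\<bar> * \<bar>u - v\<bar>" by (intro mult_right_mono) auto
    finally show ?thesis .
  qed
  show ?thesis
  proof (rule that[of r "\<bar>L\<bar>"])
    show "r > 0" by (rule r)
    show "0 \<le> \<bar>L\<bar>" by simp
    show "\<bar>f u - f v\<bar> \<le> \<bar>L\<bar> * \<bar>u - v\<bar>" if "\<bar>u - x\<bar> \<le> r" "\<bar>v - x\<bar> \<le> r" for u v
      by (rule lipL[OF that])
    show "u \<in> A" if "\<bar>u - x\<bar> \<le> r" for u by (rule inA[OF that])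
  qed
qed

lemma key_back:
  assumes "open A" "x \<in> A" "locally_lipschitz_on A f"
    and H: "\<forall>h. in_D h \<longrightarrow> ext_val f A (\<lambda>t. x + h t) (\<lambda>t. f x + h t * m)"
  shows "(f has_real_derivative m) (at x)"
proof -
  obtain r L where r: "r > 0" "L \<ge> 0"
    and lip: "\<And>u v. \<bar>u - x\<bar> \<le> r \<Longrightarrow> \<bar>v - x\<bar> \<le> r \<Longrightarrow> \<bar>f u - f v\<bar> \<le> L * \<bar>u - v\<bar>"
    and inA: "\<And>u. \<bar>u - x\<bar> \<le> r \<Longrightarrow> u \<in> A"
    using lip_near[OF assms(1-3)] by blast
  have "ext_val f A (\<lambda>t. x + t) (\<lambda>t. f x + t * m)"
    using H[rule_format, OF in_D_id] .
  then obtain y where y: "y \<in> Nil_fun A" "fr_eqv y (\<lambda>t. x + t)"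
      "fr_eqv (f \<circ> y) (\<lambda>t. f x + t * m)"
    unfolding ext_val_def by (elim bexE conjE)
  have Y: "\<forall>c>0. \<exists>d>0. \<forall>t. t \<noteq> 0 \<and> \<bar>t\<bar> < d \<longrightarrow> \<bar>y t - (x + t)\<bar> \<le> c * \<bar>t\<bar>"
    using y(2)[unfolded fr_eqv_def smallo_iff] .
  have FY: "\<forall>c>0. \<exists>d>0. \<forall>t. t \<noteq> 0 \<and> \<bar>t\<bar> < d \<longrightarrow> \<bar>f (y t) - (f x + t * m)\<bar> \<le> c * \<bar>t\<bar>"
    using y(3)[unfolded fr_eqv_def smallo_iff comp_def] .
  show ?thesis
  proof (rule deriv_from_delta, intro allI impI)
    fix c :: real assume c: "c > 0"
    have cL: "c/2/(L+1) > 0" using c r by simp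
    from mp[OF spec[OF Y, of "c/2/(L+1)"] cL]
    obtain d1 where d1: "d1 > 0" "\<forall>t. t \<noteq> 0 \<and> \<bar>t\<bar> < d1 \<longrightarrow> \<bar>y t - (x + t)\<bar> \<le> (c/2/(L+1)) * \<bar>t\<bar>"
      by (elim exE conjE)
    from mp[OF spec[OF Y, of 1] zero_less_one]
    obtain d2 where d2: "d2 > 0" "\<forall>t. t \<noteq> 0 \<and> \<bar>t\<bar> < d2 \<longrightarrow> \<bar>y t - (x + t)\<bar> \<le> 1 * \<bar>t\<bar>"
      by (elim exE conjE)
    have c2: "c/2 > 0" using c by simp
    from mp[OF spec[OF FY, of "c/2"] c2]
    obtain d3 where d3: "d3 > 0" "\<forall>t. t \<noteq> 0 \<and> \<bar>t\<bar> < d3 \<longrightarrow> \<bar>f (y t) - (f x + t * m)\<bar> \<le> (c/2) * \<bar>t\<bar>"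
      by (elim exE conjE)
    define d where "d = min (min d1 d2) (min d3 (r/2))"
    have d: "d > 0" using d1 d2 d3 r by (simp add: d_def)
    have "\<bar>f (x + t) - f x - t * m\<bar> \<le> c * \<bar>t\<bar>" if t: "t \<noteq> 0" "\<bar>t\<bar> < d" for t
    proof -
      have dd: "d \<le> d1" "d \<le> d2" "d \<le> d3" "d \<le> r/2" unfolding d_def by linarith+
      have td: "\<bar>t\<bar> < d1" "\<bar>t\<bar> < d2" "\<bar>t\<bar> < d3" "\<bar>t\<bar> < r/2" using t(2) dd by linarith+
      have e1: "\<bar>y t - (x + t)\<bar> \<le> (c/2/(L+1)) * \<bar>t\<bar>" using d1(2)[rule_format, OF conjI[OF t(1) td(1)]] .
      have e2: "\<bar>y t - (x + t)\<bar> \<le> 1 * \<bar>t\<bar>" using d2(2)[rule_format, OF conjI[OF t(1) td(2)]] .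
      have e3: "\<bar>f (y t) - (f x + t * m)\<bar> \<le> (c/2) * \<bar>t\<bar>" using d3(2)[rule_format, OF conjI[OF t(1) td(3)]] .
      have "\<bar>y t - x\<bar> \<le> r" using e2 td by linarith
      moreover have "\<bar>(x + t) - x\<bar> \<le> r" using td by linarith
      ultimately have "\<bar>f (x + t) - f (y t)\<bar> \<le> L * \<bar>(x + t) - y t\<bar>" by (rule lip[rotated])
      also have "\<dots> \<le> L * ((c/2/(L+1)) * \<bar>t\<bar>)"
        using e1 r by (intro mult_left_mono) (auto simp: abs_minus_commute)
      also have "\<dots> \<le> (c/2) * \<bar>t\<bar>"
      proof -
        have "L * (c/2/(L+1)) \<le> c/2" using r c by (simp add: field_simps)
        then show ?thesis by (metis abs_ge_zero mult.assoc mult_right_mono)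
      qed
      finally have "\<bar>f (x + t) - f (y t)\<bar> \<le> (c/2) * \<bar>t\<bar>" .
      with e3 show ?thesis by linarith
    qed
    then show "\<exists>d>0. \<forall>t. t \<noteq> 0 \<and> \<bar>t\<bar> < d \<longrightarrow> \<bar>f (x + t) - f x - t * m\<bar> \<le> c * \<bar>t\<bar>"
      using d by blast
  qed
qed


lemma key_fwd:
  assumes "open A" "x \<in> A" and D: "(f has_real_derivative m) (at x)"
  shows "\<forall>h. in_D h \<longrightarrow> ext_val f A (\<lambda>t. x + h t) (\<lambda>t. f x + h t * m)"
proof (intro allI impI)
  fix h assume hD: "in_D h"
  have h0: "h 0 = 0" using in_D_zero[OF hD] .
  from hD have "h \<in> O[at 0](\<lambda>t. t)" by (simp add: in_D_def)
  from bigo_iff[OF this] obtain c d0 where c: "c > 0" "d0 > 0"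
    "\<forall>t. t \<noteq> 0 \<and> \<bar>t\<bar> < d0 \<longrightarrow> \<bar>h t\<bar> \<le> c * \<bar>t\<bar>" by blast
  obtain e where e: "e > 0" "ball x e \<subseteq> A" using assms(1,2) openE by blast
  define y where "y t = (if \<bar>h t\<bar> < e then x + h t else x)" for t
  have yA: "\<forall>t. y t \<in> A"
  proof
    fix t
    have "\<bar>x - (x + h t)\<bar> < e" if "\<bar>h t\<bar> < e" using that by simp
    then show "y t \<in> A" using e assms(2) by (auto simp: y_def dist_norm subset_iff)
  qed
  have y0: "y 0 = x" using e h0 by (simp add: y_def)
  have near: "y t = x + h t" if "t \<noteq> 0" "\<bar>t\<bar> < min d0 (e/c)" for t
  proof -
    have "\<bar>h t\<bar> \<le> c * \<bar>t\<bar>" using c that by auto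
    also have "\<dots> < c * (e/c)" using that c by (intro mult_strict_left_mono) auto
    finally show ?thesis using c by (simp add: y_def)
  qed
  have md: "min d0 (e/c) > 0" using c e by simp
  have nil: "nilpotent y"
  proof -
    have "(\<lambda>t. \<bar>y t - y 0\<bar> ^ 2) \<in> o[at 0](\<lambda>t. t)"
      unfolding smallo_iff
    proof (intro allI impI)
      fix b :: real assume b: "b > 0"
      define d where "d = min (min d0 (e/c)) (b/(c*c))"
      have d: "d > 0" using md b c by (simp add: d_def)
      have "\<bar>\<bar>y t - y 0\<bar> ^ 2\<bar> \<le> b * \<bar>t\<bar>" if t: "t \<noteq> 0" "\<bar>t\<bar> < d" for t
      proof -
        have t1: "\<bar>t\<bar> < min d0 (e/c)" "\<bar>t\<bar> < b/(c*c)" using t by (auto simp: d_def)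
        have hb: "\<bar>h t\<bar> \<le> c * \<bar>t\<bar>" using c t t1 by auto
        have "\<bar>\<bar>y t - y 0\<bar> ^ 2\<bar> = \<bar>h t\<bar> * \<bar>h t\<bar>"
          using near[OF t(1) t1(1)] y0 by (simp add: power2_eq_square abs_mult)
        also have "\<dots> \<le> (c * \<bar>t\<bar>) * (c * \<bar>t\<bar>)" using hb by (intro mult_mono) auto
        also have "\<dots> = (c * c * \<bar>t\<bar>) * \<bar>t\<bar>" by simp
        also have "\<dots> \<le> b * \<bar>t\<bar>"
        proof (intro mult_right_mono)
          show "c * c * \<bar>t\<bar> \<le> b" using t1(2) c by (simp add: field_simps)
        qed simp
        finally show ?thesis .
      qed
      then show "\<exists>d>0. \<forall>t. t \<noteq> 0 \<and> \<bar>t\<bar> < d \<longrightarrow> \<bar>\<bar>y t - y 0\<bar> ^ 2\<bar> \<le> b * \<bar>t\<bar>"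
        using d by blast
    qed
    then show ?thesis unfolding nilpotent_def by blast
  qed
  have eq1: "fr_eqv y (\<lambda>t. x + h t)"
    unfolding fr_eqv_def smallo_iff
  proof (intro allI impI)
    fix b :: real assume "b > 0"
    then show "\<exists>d>0. \<forall>t. t \<noteq> 0 \<and> \<bar>t\<bar> < d \<longrightarrow> \<bar>y t - (x + h t)\<bar> \<le> b * \<bar>t\<bar>"
      using md near by (intro exI[of _ "min d0 (e/c)"]) auto
  qed
  have eq2: "fr_eqv (f \<circ> y) (\<lambda>t. f x + h t * m)"
    unfolding fr_eqv_def smallo_iff
  proof (intro allI impI)
    fix b :: real assume b: "b > 0"
    obtain d1 where d1: "d1 > 0" "\<forall>u. \<bar>u\<bar> < d1 \<longrightarrow> \<bar>f (x + u) - f x - u * m\<bar> \<le> (b/c) * \<bar>u\<bar>"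
      using deriv_delta[OF D, of "b/c"] b c by auto
    define d where "d = min (min d0 (e/c)) (d1/c)"
    have d: "d > 0" using md d1 c by (simp add: d_def)
    have "\<bar>(f \<circ> y) t - (f x + h t * m)\<bar> \<le> b * \<bar>t\<bar>" if t: "t \<noteq> 0" "\<bar>t\<bar> < d" for t
    proof -
      have t1: "\<bar>t\<bar> < min d0 (e/c)" "\<bar>t\<bar> < d1/c" using t by (auto simp: d_def)
      have hb: "\<bar>h t\<bar> \<le> c * \<bar>t\<bar>" using c t t1 by auto
      have "c * \<bar>t\<bar> < c * (d1/c)" using t1 c by (intro mult_strict_left_mono) auto
      then have hd: "\<bar>h t\<bar> < d1" using hb c by simp
      have "\<bar>(f \<circ> y) t - (f x + h t * m)\<bar> = \<bar>f (x + h t) - f x - h t * m\<bar>"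
        using near[OF t(1) t1(1)] by simp
      also have "\<dots> \<le> (b/c) * \<bar>h t\<bar>" using d1 hd by blast
      also have "\<dots> \<le> (b/c) * (c * \<bar>t\<bar>)" using hb b c by (intro mult_left_mono) auto
      also have "\<dots> = b * \<bar>t\<bar>" using c by simp
      finally show ?thesis .
    qed
    then show "\<exists>d>0. \<forall>t. t \<noteq> 0 \<and> \<bar>t\<bar> < d \<longrightarrow> \<bar>(f \<circ> y) t - (f x + h t * m)\<bar> \<le> b * \<bar>t\<bar>"
      using d by blast
  qed
  have "y \<in> Nil_fun A" using nil yA by (simp add: Nil_fun_def)
  with eq1 eq2 show "ext_val f A (\<lambda>t. x + h t) (\<lambda>t. f x + h t * m)"
    unfolding ext_val_def by blast
qed

theorem mainTheorem11:
  fixes A :: "real set" and x :: real and f :: "real \<Rightarrow> real"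
  assumes "open A" and "x \<in> A" and "locally_lipschitz_on A f"
  shows "(f differentiable (at x) \<longleftrightarrow>
           (\<exists>!m::real. \<forall>h. in_D h \<longrightarrow>
              ext_val f A (\<lambda>t. x + h t) (\<lambda>t. f x + h t * m)))
         \<and> (f differentiable (at x) \<longrightarrow>
           (\<forall>m::real. (\<forall>h. in_D h \<longrightarrow>
              ext_val f A (\<lambda>t. x + h t) (\<lambda>t. f x + h t * m)) \<longrightarrow> m = deriv f x))"
proof -
  have bk: "(f has_real_derivative m) (at x)"
    if "\<forall>h. in_D h \<longrightarrow> ext_val f A (\<lambda>t. x + h t) (\<lambda>t. f x + h t * m)" for m
    using key_back[OF assms that] .
  have last: "m = deriv f x"
    if "\<forall>h. in_D h \<longrightarrow> ext_val f A (\<lambda>t. x + h t) (\<lambda>t. f x + h t * m)" for m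
    using DERIV_imp_deriv[OF bk[OF that]] by simp
  have fwd: "\<exists>!m::real. \<forall>h. in_D h \<longrightarrow> ext_val f A (\<lambda>t. x + h t) (\<lambda>t. f x + h t * m)"
    if "f differentiable (at x)"
  proof (rule ex1I)
    have "(f has_real_derivative deriv f x) (at x)"
      using that by (simp only: DERIV_deriv_iff_real_differentiable)
    then show "\<forall>h. in_D h \<longrightarrow> ext_val f A (\<lambda>t. x + h t) (\<lambda>t. f x + h t * deriv f x)"
      by (rule key_fwd[OF assms(1,2)])
  next
    fix m assume "\<forall>h. in_D h \<longrightarrow> ext_val f A (\<lambda>t. x + h t) (\<lambda>t. f x + h t * m)"
    then show "m = deriv f x" by (rule last)
  qed
  have bwd: "f differentiable (at x)"
    if "\<exists>!m::real. \<forall>h. in_D h \<longrightarrow> ext_val f A (\<lambda>t. x + h t) (\<lambda>t. f x + h t * m)"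
  proof -
    from that obtain m where "\<forall>h. in_D h \<longrightarrow> ext_val f A (\<lambda>t. x + h t) (\<lambda>t. f x + h t * m)"
      by (rule ex1E)
    from bk[OF this] show ?thesis unfolding real_differentiable_def by (rule exI)
  qed
  show ?thesis
  proof (intro conjI impI allI iffI)
    show "\<exists>!m::real. \<forall>h. in_D h \<longrightarrow> ext_val f A (\<lambda>t. x + h t) (\<lambda>t. f x + h t * m)"
      if "f differentiable (at x)" using fwd[OF that] .
    show "f differentiable (at x)"
      if "\<exists>!m::real. \<forall>h. in_D h \<longrightarrow> ext_val f A (\<lambda>t. x + h t) (\<lambda>t. f x + h t * m)"
      using bwd[OF that] .
    show "m = deriv f x"
      if "\<forall>h. in_D h \<longrightarrow> ext_val f A (\<lambda>t. x + h t) (\<lambda>t. f x + h t * m)" for m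
      using last[OF that] .
  qed
qed

end
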